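(* Let $\Omega=\mathbb{T}^3$, $\delta>0$, $q\ge1$, $t>0$, and let $\mathbf{u}:[0,t]\times\Omega\to\mathbb{R}^3$ be sufficiently regular and periodic in $x$. Set $B=|\mathbb{D}(\mathbf{u})|^2+\delta^2$. Then $$\mathbb{J}:=-\int_0^t\int_\Omega\mathbf{u}_t\cdot\operatorname{div}\Big(B^{\frac{q-2}{2}}\mathbb{D}(\mathbf{u})\Big)_t\,dx\,ds\ \ge\ 0 .$$
   Context: $\mathbb{D}(\mathbf{u})=\frac12(\nabla\mathbf{u}+\nabla^t\mathbf{u})$ is the symmetric gradient, $|\mathbb{D}(\mathbf{u})|^2=\sum_{i,j}\mathbb{D}_{ij}(\mathbf{u})^2$, and the subscript $t$ denotes the time derivative. *)

theory Defs
  imports "HOL-Analysis.Analysis"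
begin

definition dirD :: "'a::real_normed_vector \<Rightarrow> ('a \<Rightarrow> real) \<Rightarrow> 'a \<Rightarrow> real" where
  "dirD v f z = deriv (\<lambda>h. f (z + h *\<^sub>R v)) 0"

fun iterD :: "'a::real_normed_vector list \<Rightarrow> ('a \<Rightarrow> real) \<Rightarrow> 'a \<Rightarrow> real" where
  "iterD [] f = f"
| "iterD (v # vs) f = dirD v (iterD vs f)"

definition smooth_fun :: "('a::euclidean_space \<Rightarrow> real) \<Rightarrow> bool" where
  "smooth_fun f \<longleftrightarrow> (\<forall>vs. set vs \<subseteq> Basis \<longrightarrow>
      continuous_on UNIV (iterD vs f) \<and>
      (\<forall>v\<in>Basis. \<forall>z. (\<lambda>h. iterD vs f (z + h *\<^sub>R v)) differentiable (at 0)))"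

text \<open>Space-time variable z = (s, x) with s time, x in R^3.\<close>
definition comp :: "(real \<Rightarrow> real^3 \<Rightarrow> real^3) \<Rightarrow> 3 \<Rightarrow> real \<times> (real^3) \<Rightarrow> real" where
  "comp u i z = u (fst z) (snd z) $ i"

definition dt :: "(real \<times> (real^3) \<Rightarrow> real) \<Rightarrow> real \<times> (real^3) \<Rightarrow> real" where
  "dt f = dirD (1, 0) f"

definition dx :: "3 \<Rightarrow> (real \<times> (real^3) \<Rightarrow> real) \<Rightarrow> real \<times> (real^3) \<Rightarrow> real" where
  "dx j f = dirD (0, axis j 1) f"

definition symgrad :: "(real \<Rightarrow> real^3 \<Rightarrow> real^3) \<Rightarrow> 3 \<Rightarrow> 3 \<Rightarrow> real \<times> (real^3) \<Rightarrow> real" where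
  "symgrad u i j z = (dx j (comp u i) z + dx i (comp u j) z) / 2"

definition Bfun :: "real \<Rightarrow> (real \<Rightarrow> real^3 \<Rightarrow> real^3) \<Rightarrow> real \<times> (real^3) \<Rightarrow> real" where
  "Bfun \<delta> u z = (\<Sum>i\<in>UNIV. \<Sum>j\<in>UNIV. (symgrad u i j z)^2) + \<delta>^2"

definition divflux :: "real \<Rightarrow> real \<Rightarrow> (real \<Rightarrow> real^3 \<Rightarrow> real^3) \<Rightarrow> 3 \<Rightarrow> real \<times> (real^3) \<Rightarrow> real" where
  "divflux \<delta> q u i z = (\<Sum>j\<in>UNIV. dx j (\<lambda>y. Bfun \<delta> u y powr ((q - 2) / 2) * symgrad u i j y) z)"

text \<open>The torus T^3 is realised as R^3 / Z^3 with fundamental cell [0,1]^3.\<close>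
definition JJ :: "real \<Rightarrow> real \<Rightarrow> real \<Rightarrow> (real \<Rightarrow> real^3 \<Rightarrow> real^3) \<Rightarrow> real" where
  "JJ \<delta> q t u = - integral (cbox (0, 0) (t, \<chi> i. 1))
      (\<lambda>z. \<Sum>i\<in>UNIV. dt (comp u i) z * dt (divflux \<delta> q u i) z)"

end

theory Submission
  imports Defs
begin


definition pd :: "'a::real_normed_vector \<Rightarrow> ('a \<Rightarrow> real) \<Rightarrow> ('a \<Rightarrow> real) \<Rightarrow> bool" where
  "pd v f f' \<longleftrightarrow> (\<forall>z. ((\<lambda>h. f (z + h *\<^sub>R v)) has_real_derivative f' z) (at 0))"

lemma pd_dirD: "pd v f f' \<Longrightarrow> dirD v f = f'"
  unfolding dirD_def pd_def by (auto intro!: ext DERIV_imp_deriv)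

lemma pd_at:
  assumes "pd v f f'"
  shows "((\<lambda>h. f (z + h *\<^sub>R v)) has_real_derivative f' (z + h0 *\<^sub>R v)) (at h0)"
proof -
  have "((\<lambda>h. f ((z + h0 *\<^sub>R v) + h *\<^sub>R v)) has_real_derivative f' (z + h0 *\<^sub>R v)) (at 0)"
    using assms unfolding pd_def by blast
  then have "((\<lambda>h. f (z + (h + h0) *\<^sub>R v)) has_real_derivative f' (z + h0 *\<^sub>R v)) (at 0)"
    by (simp add: scaleR_add_left algebra_simps)
  then show ?thesis
    using DERIV_shift[of "\<lambda>h. f (z + h *\<^sub>R v)" _ 0 h0] by simp
qed

lemma pd_const: "pd v (\<lambda>_. c) (\<lambda>_. 0)"
  unfolding pd_def by auto

lemma pd_add: "pd v f f' \<Longrightarrow> pd v g g' \<Longrightarrow> pd v (\<lambda>z. f z + g z) (\<lambda>z. f' z + g' z)"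
  unfolding pd_def by (auto intro!: derivative_eq_intros)

lemma pd_mult: "pd v f f' \<Longrightarrow> pd v g g' \<Longrightarrow> pd v (\<lambda>z. f z * g z) (\<lambda>z. f' z * g z + f z * g' z)"
  unfolding pd_def by (auto intro!: derivative_eq_intros)

lemma pd_sum: "finite S \<Longrightarrow> (\<And>i. i \<in> S \<Longrightarrow> pd v (f i) (f' i)) \<Longrightarrow>
   pd v (\<lambda>z. \<Sum>i\<in>S. f i z) (\<lambda>z. \<Sum>i\<in>S. f' i z)"
  unfolding pd_def by (auto intro!: DERIV_sum)

lemma pd_powr: "pd v f f' \<Longrightarrow> (\<And>z. f z > 0) \<Longrightarrow>
   pd v (\<lambda>z. f z powr p) (\<lambda>z. (p * f z powr (p - 1)) * f' z)"
  unfolding pd_def using DERIV_fun_powr by fastforce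

lemma pd_exists_dirD: "pd v f f' \<Longrightarrow> pd v f (dirD v f)"
  using pd_dirD by metis

fun Cn :: "nat \<Rightarrow> ('a::euclidean_space \<Rightarrow> real) \<Rightarrow> bool" where
  "Cn 0 f = (continuous_on UNIV f \<and> (\<forall>v\<in>Basis. pd v f (dirD v f)))"
| "Cn (Suc n) f = (Cn 0 f \<and> (\<forall>v\<in>Basis. Cn n (dirD v f)))"

lemma Cn_0: "Cn n f \<Longrightarrow> Cn 0 f"
  by (cases n) auto

lemma Cn_mono: "Cn (Suc n) f \<Longrightarrow> Cn n f"
proof (induction n arbitrary: f)
  case 0 then show ?case by simp
next
  case (Suc n) then show ?case by simp
qed

lemma Cn_const: "Cn n (\<lambda>_. c)"
proof (induction n arbitrary: c)
  case 0 then show ?case using pd_const pd_dirD by (metis Cn.simps(1) continuous_on_const)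
next
  case (Suc n)
  have "dirD v (\<lambda>_. c) = (\<lambda>_. 0)" for v :: 'a using pd_const pd_dirD by metis
  then show ?case using Suc Cn_0 by (auto simp: pd_def)
qed

lemma Cn_add: "Cn n f \<Longrightarrow> Cn n g \<Longrightarrow> Cn n (\<lambda>z. f z + g z)"
proof (induction n arbitrary: f g)
  case 0
  then show ?case
    using pd_add pd_exists_dirD by (auto intro!: continuous_on_add) blast
next
  case (Suc n)
  have d: "dirD v (\<lambda>z. f z + g z) = (\<lambda>z. dirD v f z + dirD v g z)" if "v \<in> Basis" for v
    using Suc.prems that by (intro pd_dirD pd_add) auto
  have c0: "Cn 0 (\<lambda>z. f z + g z)"
    using Suc.prems pd_add pd_exists_dirD by (auto intro!: continuous_on_add) blast
  show ?case using Suc d c0 by simp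
qed

lemma Cn_mult: "Cn n f \<Longrightarrow> Cn n g \<Longrightarrow> Cn n (\<lambda>z. f z * g z)"
proof (induction n arbitrary: f g)
  case 0
  then show ?case
    using pd_mult pd_exists_dirD by (auto intro!: continuous_on_mult) blast
next
  case (Suc n)
  have d: "dirD v (\<lambda>z. f z * g z) = (\<lambda>z. dirD v f z * g z + f z * dirD v g z)" if "v \<in> Basis" for v
    using Suc.prems that by (intro pd_dirD pd_mult) auto
  have c0: "Cn 0 (\<lambda>z. f z * g z)"
    using Suc.prems pd_mult pd_exists_dirD by (auto intro!: continuous_on_mult) blast
  have "Cn n (dirD v (\<lambda>z. f z * g z))" if v: "v \<in> Basis" for v
  proof -
    have "Cn n (dirD v f)" "Cn n (dirD v g)" "Cn n f" "Cn n g"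
      using Suc.prems v Cn_mono by auto
    then show ?thesis unfolding d[OF v] using Suc.IH Cn_add by blast
  qed
  then show ?case using c0 by simp
qed

lemma Cn_sum: "finite S \<Longrightarrow> (\<And>i. i \<in> S \<Longrightarrow> Cn n (f i)) \<Longrightarrow> Cn n (\<lambda>z. \<Sum>i\<in>S. f i z)"
proof (induction S rule: finite_induct)
  case empty then show ?case using Cn_const by simp
next
  case (insert x F) then show ?case using Cn_add[of n "f x" "\<lambda>z. \<Sum>i\<in>F. f i z"] by simp
qed

lemma Cn_powr: "Cn n f \<Longrightarrow> (\<And>z. f z > 0) \<Longrightarrow> Cn n (\<lambda>z. f z powr p)"
proof (induction n arbitrary: f p)
  case 0
  have "pd v (\<lambda>z. f z powr p) (dirD v (\<lambda>z. f z powr p))" if "v \<in> Basis" for v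
    using pd_powr[of v f "dirD v f" p] 0 that pd_exists_dirD by auto
  moreover have "continuous_on UNIV (\<lambda>z. f z powr p)"
    using 0 by (auto intro!: continuous_on_powr continuous_on_const) (metis less_irrefl)
  ultimately show ?case by simp
next
  case (Suc n)
  have d: "dirD v (\<lambda>z. f z powr p) = (\<lambda>z. (p * f z powr (p - 1)) * dirD v f z)" if "v \<in> Basis" for v
    using Suc.prems that by (intro pd_dirD pd_powr) auto
  have c0: "Cn 0 (\<lambda>z. f z powr p)"
  proof -
    have "pd v (\<lambda>z. f z powr p) (dirD v (\<lambda>z. f z powr p))" if "v \<in> Basis" for v
      using pd_powr[of v f "dirD v f" p] Suc.prems that pd_exists_dirD by auto
    moreover have "continuous_on UNIV (\<lambda>z. f z powr p)"
      using Suc.prems by (auto intro!: continuous_on_powr continuous_on_const) (metis less_irrefl)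
    ultimately show ?thesis by simp
  qed
  have "Cn n (dirD v (\<lambda>z. f z powr p))" if v: "v \<in> Basis" for v
  proof -
    have "Cn n (dirD v f)" "Cn n f"
      using Suc.prems v Cn_mono by auto
    then have "Cn n (\<lambda>z. f z powr (p - 1))" using Suc by blast
    then have "Cn n (\<lambda>z. p * f z powr (p - 1))" using Cn_mult[OF Cn_const] by blast
    then show ?thesis unfolding d[OF v] using Cn_mult \<open>Cn n (dirD v f)\<close> by blast
  qed
  then show ?case using c0 by simp
qed

definition sm :: "('a::euclidean_space \<Rightarrow> real) \<Rightarrow> bool" where
  "sm f \<longleftrightarrow> (\<forall>n. Cn n f)"

lemma sm_const: "sm (\<lambda>_. c)" unfolding sm_def using Cn_const by blast
lemma sm_add: "sm f \<Longrightarrow> sm g \<Longrightarrow> sm (\<lambda>z. f z + g z)" unfolding sm_def using Cn_add by blast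
lemma sm_mult: "sm f \<Longrightarrow> sm g \<Longrightarrow> sm (\<lambda>z. f z * g z)" unfolding sm_def using Cn_mult by blast
lemma sm_sum: "finite S \<Longrightarrow> (\<And>i. i \<in> S \<Longrightarrow> sm (f i)) \<Longrightarrow> sm (\<lambda>z. \<Sum>i\<in>S. f i z)"
  unfolding sm_def using Cn_sum by blast
lemma sm_powr: "sm f \<Longrightarrow> (\<And>z. f z > 0) \<Longrightarrow> sm (\<lambda>z. f z powr p)"
  unfolding sm_def using Cn_powr by blast
lemma sm_cont: "sm f \<Longrightarrow> continuous_on UNIV f"
  unfolding sm_def using Cn.simps(1) by blast
lemma sm_pd: "sm f \<Longrightarrow> v \<in> Basis \<Longrightarrow> pd v f (dirD v f)"
  unfolding sm_def using Cn.simps(1) by blast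
lemma sm_dirD: "sm f \<Longrightarrow> v \<in> Basis \<Longrightarrow> sm (dirD v f)"
  unfolding sm_def using Cn.simps(2) by blast

lemma iterD_snoc: "iterD (vs @ [v]) f = iterD vs (dirD v f)"
  by (induction vs) auto

lemma smooth_fun_dirD: "smooth_fun f \<Longrightarrow> v \<in> Basis \<Longrightarrow> smooth_fun (dirD v f)"
  unfolding smooth_fun_def
proof (intro allI impI)
  fix vs :: "'a list"
  assume a: "\<forall>vs. set vs \<subseteq> Basis \<longrightarrow> continuous_on UNIV (iterD vs f) \<and>
             (\<forall>v\<in>Basis. \<forall>z. (\<lambda>h. iterD vs f (z + h *\<^sub>R v)) differentiable at 0)"
    and v: "v \<in> Basis" and vs: "set vs \<subseteq> Basis"
  then show "continuous_on UNIV (iterD vs (dirD v f)) \<and>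
     (\<forall>w\<in>Basis. \<forall>z. (\<lambda>h. iterD vs (dirD v f) (z + h *\<^sub>R w)) differentiable at 0)"
    using a[rule_format, of "vs @ [v]"] by (simp add: iterD_snoc)
qed

lemma smooth_fun_Cn0: "smooth_fun f \<Longrightarrow> Cn 0 f"
proof -
  assume s: "smooth_fun f"
  then have c: "continuous_on UNIV f" and d: "\<And>v z. v \<in> Basis \<Longrightarrow> (\<lambda>h. f (z + h *\<^sub>R v)) differentiable at 0"
    unfolding smooth_fun_def by (metis empty_subsetI iterD.simps(1) list.set(1))+
  have "pd v f (dirD v f)" if "v \<in> Basis" for v
    unfolding pd_def dirD_def using d[OF that] DERIV_deriv_iff_real_differentiable by blast
  then show ?thesis using c by simp
qed

lemma smooth_fun_sm: "smooth_fun f \<Longrightarrow> sm f"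
proof -
  have "smooth_fun f \<Longrightarrow> Cn n f" for n
  proof (induction n arbitrary: f)
    case 0 then show ?case using smooth_fun_Cn0 by blast
  next
    case (Suc n)
    have "\<forall>v\<in>Basis. Cn n (dirD v f)" using Suc smooth_fun_dirD by blast
    then show ?case using smooth_fun_Cn0 Suc.prems by simp
  qed
  then show "smooth_fun f \<Longrightarrow> sm f" unfolding sm_def by blast
qed




lemma schwarz:
  fixes f :: "'a::euclidean_space \<Rightarrow> real"
  assumes sf: "sm f" and a: "a \<in> Basis" and b: "b \<in> Basis"
  shows "dirD b (dirD a f) z = dirD a (dirD b f) z"
proof -
  define fa where "fa = dirD a f"
  define fb where "fb = dirD b f"
  define fab where "fab = dirD a fb"
  have pa: "pd a f fa" using sm_pd[OF sf a] fa_def by simp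
  have pb: "pd b f fb" using sm_pd[OF sf b] fb_def by simp
  have sfb: "sm fb" using sm_dirD[OF sf b] fb_def by simp
  have sfa: "sm fa" using sm_dirD[OF sf a] fa_def by simp
  have pab: "pd a fb fab" using sm_pd[OF sfb a] fab_def by simp
  have pba: "pd b fa (dirD b fa)" using sm_pd[OF sfa b] by simp
  have cab: "continuous_on UNIV fab" using sm_cont[OF sm_dirD[OF sfb a]] fab_def by simp
  have cfb: "continuous_on UNIV fb" using sm_cont[OF sfb] .
  have ftc: "f (z + s *\<^sub>R a + y *\<^sub>R b) = f (z + s *\<^sub>R a) + integral {0..y} (\<lambda>\<eta>. fb (z + s *\<^sub>R a + \<eta> *\<^sub>R b))"
    if "0 \<le> y" for s y
  proof -
    have "((\<lambda>\<eta>. fb (z + s *\<^sub>R a + \<eta> *\<^sub>R b)) has_integral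
           (f (z + s *\<^sub>R a + y *\<^sub>R b) - f (z + s *\<^sub>R a + 0 *\<^sub>R b))) {0..y}"
    proof (rule fundamental_theorem_of_calculus[OF that])
      fix x assume "x \<in> {0..y}"
      have "((\<lambda>\<eta>. f (z + s *\<^sub>R a + \<eta> *\<^sub>R b)) has_real_derivative fb (z + s *\<^sub>R a + x *\<^sub>R b)) (at x)"
        by (rule pd_at[OF pb])
      then have "((\<lambda>\<eta>. f (z + s *\<^sub>R a + \<eta> *\<^sub>R b)) has_vector_derivative fb (z + s *\<^sub>R a + x *\<^sub>R b)) (at x)"
        unfolding has_real_derivative_iff_has_vector_derivative .
      then show "((\<lambda>\<eta>. f (z + s *\<^sub>R a + \<eta> *\<^sub>R b)) has_vector_derivative fb (z + s *\<^sub>R a + x *\<^sub>R b)) (at x within {0..y})"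
        by (rule has_vector_derivative_at_within)
    qed
    then have "integral {0..y} (\<lambda>\<eta>. fb (z + s *\<^sub>R a + \<eta> *\<^sub>R b)) =
           f (z + s *\<^sub>R a + y *\<^sub>R b) - f (z + s *\<^sub>R a + 0 *\<^sub>R b)" by (rule integral_unique)
    then show ?thesis by simp
  qed
  have leib: "((\<lambda>s. integral {0..y} (\<lambda>\<eta>. fb (z + s *\<^sub>R a + \<eta> *\<^sub>R b))) has_real_derivative
       integral {0..y} (\<lambda>\<eta>. fab (z + 0 *\<^sub>R a + \<eta> *\<^sub>R b))) (at 0)" for y
  proof -
    have cont2: "continuous_on UNIV (\<lambda>p::real\<times>real. fab (z + fst p *\<^sub>R a + snd p *\<^sub>R b))"
      by (intro continuous_on_compose2[OF cab] continuous_intros) auto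
    have "((\<lambda>s. integral (cbox 0 y) (\<lambda>\<eta>. fb (z + s *\<^sub>R a + \<eta> *\<^sub>R b))) has_field_derivative
       integral (cbox 0 y) (\<lambda>\<eta>. fab (z + 0 *\<^sub>R a + \<eta> *\<^sub>R b))) (at 0 within UNIV)"
    proof (rule leibniz_rule_field_derivative[where fx="\<lambda>s \<eta>. fab (z + s *\<^sub>R a + \<eta> *\<^sub>R b)"])
      fix s \<eta> :: real
      have e: "(\<lambda>s. fb (z + \<eta> *\<^sub>R b + s *\<^sub>R a)) = (\<lambda>s. fb (z + s *\<^sub>R a + \<eta> *\<^sub>R b))"
        by (simp add: algebra_simps)
      show "((\<lambda>s. fb (z + s *\<^sub>R a + \<eta> *\<^sub>R b)) has_field_derivative fab (z + s *\<^sub>R a + \<eta> *\<^sub>R b)) (at s within UNIV)"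
        using pd_at[OF pab, of "z + \<eta> *\<^sub>R b" s] unfolding e by (simp add: algebra_simps)
    next
      fix s :: real
      show "(\<lambda>\<eta>. fb (z + s *\<^sub>R a + \<eta> *\<^sub>R b)) integrable_on cbox 0 y"
        by (intro integrable_continuous continuous_on_compose2[OF cfb] continuous_intros) auto
    next
      show "continuous_on (UNIV \<times> cbox 0 y) (\<lambda>(s, \<eta>). fab (z + s *\<^sub>R a + \<eta> *\<^sub>R b))"
        using continuous_on_subset[OF cont2] by (simp add: case_prod_beta)
    qed auto
    then show ?thesis by simp
  qed
  have eq3: "fa (z + y *\<^sub>R b) = fa z + integral {0..y} (\<lambda>\<eta>. fab (z + \<eta> *\<^sub>R b))" if "0 \<le> y" for y
  proof -
    have e: "(\<lambda>s. f (z + y *\<^sub>R b + s *\<^sub>R a)) = (\<lambda>s. f (z + s *\<^sub>R a + y *\<^sub>R b))"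
      by (simp add: algebra_simps)
    have d1: "((\<lambda>s. f (z + s *\<^sub>R a + y *\<^sub>R b)) has_real_derivative fa (z + y *\<^sub>R b)) (at 0)"
      using pd_at[OF pa, of "z + y *\<^sub>R b" 0] unfolding e by simp
    have e2: "(\<lambda>s. f (z + s *\<^sub>R a + y *\<^sub>R b)) =
        (\<lambda>s. f (z + s *\<^sub>R a) + integral {0..y} (\<lambda>\<eta>. fb (z + s *\<^sub>R a + \<eta> *\<^sub>R b)))"
      using ftc[OF that] by auto
    have d2: "((\<lambda>s. f (z + s *\<^sub>R a + y *\<^sub>R b)) has_real_derivative
         fa z + integral {0..y} (\<lambda>\<eta>. fab (z + 0 *\<^sub>R a + \<eta> *\<^sub>R b))) (at 0)"
      unfolding e2 using DERIV_add[OF pd_at[OF pa, of z 0] leib[of y]] by simp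
    show ?thesis using DERIV_unique[OF d1 d2] by simp
  qed
  have "((\<lambda>y. fa (z + y *\<^sub>R b)) has_real_derivative dirD b fa (z + 0 *\<^sub>R b)) (at 0)"
    by (rule pd_at[OF pba])
  then have "((\<lambda>y. fa (z + y *\<^sub>R b)) has_vector_derivative dirD b fa z) (at 0)"
    unfolding has_real_derivative_iff_has_vector_derivative by simp
  then have d1: "((\<lambda>y. fa (z + y *\<^sub>R b)) has_vector_derivative dirD b fa z) (at 0 within cbox 0 1)"
    by (rule has_vector_derivative_at_within)
  have cab1: "continuous_on {0..1} (\<lambda>\<eta>. fab (z + \<eta> *\<^sub>R b))"
    by (intro continuous_on_compose2[OF cab] continuous_intros) auto
  have "((\<lambda>u. integral {0..u} (\<lambda>\<eta>. fab (z + \<eta> *\<^sub>R b))) has_vector_derivative fab (z + 0 *\<^sub>R b)) (at 0 within {0..1})"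
    by (rule integral_has_vector_derivative[OF cab1]) simp
  then have "((\<lambda>y. fa z + integral {0..y} (\<lambda>\<eta>. fab (z + \<eta> *\<^sub>R b))) has_vector_derivative
       0 + fab (z + 0 *\<^sub>R b)) (at 0 within {0..1})"
    by (intro has_vector_derivative_add has_vector_derivative_const)
  then have d2': "((\<lambda>y. fa z + integral {0..y} (\<lambda>\<eta>. fab (z + \<eta> *\<^sub>R b))) has_vector_derivative
       fab z) (at 0 within cbox 0 1)"
    by simp
  have d2: "((\<lambda>y. fa (z + y *\<^sub>R b)) has_vector_derivative fab z) (at 0 within cbox 0 1)"
  proof (rule has_vector_derivative_transform_within[OF d2', where d=1])
    show "(0::real) < 1" by simp
    show "(0::real) \<in> cbox 0 1" by simp
    fix y :: real assume "y \<in> cbox 0 1"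
    then have "0 \<le> y" by simp
    then show "fa z + integral {0..y} (\<lambda>\<eta>. fab (z + \<eta> *\<^sub>R b)) = fa (z + y *\<^sub>R b)"
      using eq3 by simp
  qed
  have "dirD b fa z = fab z"
    by (rule vector_derivative_unique_within_closed_interval[of 0 1 0, OF _ _ d1 d2]) auto
  then show ?thesis unfolding fa_def fab_def fb_def .
qed



definition per :: "'a::real_normed_vector \<Rightarrow> ('a \<Rightarrow> real) \<Rightarrow> bool" where
  "per k f \<longleftrightarrow> (\<forall>z. f (z + k) = f z)"

lemma per_dirD: "per k f \<Longrightarrow> per k (dirD v f)"
  unfolding per_def dirD_def
proof (intro allI)
  fix z assume p: "\<forall>z. f (z + k) = f z"
  have "(\<lambda>h. f (z + k + h *\<^sub>R v)) = (\<lambda>h. f (z + h *\<^sub>R v))"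
  proof
    fix h
    have e: "z + k + h *\<^sub>R v = (z + h *\<^sub>R v) + k" by (simp add: algebra_simps)
    show "f (z + k + h *\<^sub>R v) = f (z + h *\<^sub>R v)" unfolding e by (rule p[rule_format])
  qed
  then show "deriv (\<lambda>h. f (z + k + h *\<^sub>R v)) 0 = deriv (\<lambda>h. f (z + h *\<^sub>R v)) 0" by simp
qed

lemma has_integral_shift:
  fixes f :: "'a::euclidean_space \<Rightarrow> real"
  assumes "(f has_integral i) (cbox p q)"
  shows "((\<lambda>x. f (x + d)) has_integral i) (cbox (p - d) (q - d))"
proof -
  have e: "p - d + d = p" "q - d + d = q" by simp_all
  have h: "((f \<circ> (+) d) has_integral i) (cbox (p - d) (q - d))"
    using has_integral_shift_cbox_iff[of f d i "p - d" "q - d"] assms unfolding e by blast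
  have fe: "(f \<circ> (+) d) = (\<lambda>x. f (x + d))" by (simp add: fun_eq_iff add.commute)
  show ?thesis using h unfolding fe .
qed

lemma box_split:
  fixes a b :: "'a::euclidean_space"
  assumes k: "k \<in> Basis" and bk: "b \<bullet> k = a \<bullet> k + 1" and d: "0 \<le> d" "d \<le> 1"
  shows "cbox a b \<inter> {x. x \<bullet> k \<le> a \<bullet> k + d} = cbox a (b - (1 - d) *\<^sub>R k)"
    and "cbox a b \<inter> {x. a \<bullet> k + d \<le> x \<bullet> k} = cbox (a + d *\<^sub>R k) b"
proof -
  have ki: "\<And>i. i \<in> Basis \<Longrightarrow> k \<bullet> i = (if k = i then 1 else 0)" by (rule inner_Basis[OF k])
  have k0: "\<And>i. i \<in> Basis \<Longrightarrow> 0 \<le> k \<bullet> i" using ki by simp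
  have kk: "k \<bullet> k = 1" using ki[OF k] by simp
  have m1: "\<And>i. (b - (1 - d) *\<^sub>R k) \<bullet> i = b \<bullet> i - (1 - d) * (k \<bullet> i)"
    by (simp add: inner_diff_left)
  have m2: "\<And>i. (a + d *\<^sub>R k) \<bullet> i = a \<bullet> i + d * (k \<bullet> i)"
    by (simp add: inner_add_left)
  have p1: "\<And>i. i \<in> Basis \<Longrightarrow> 0 \<le> (1 - d) * (k \<bullet> i)" using k0 d by simp
  have p2: "\<And>i. i \<in> Basis \<Longrightarrow> 0 \<le> d * (k \<bullet> i)" using k0 d by simp
  have i1: "\<And>i. i \<in> Basis \<Longrightarrow> i \<noteq> k \<Longrightarrow> k \<bullet> i = 0" using ki by fastforce
  show "cbox a b \<inter> {x. x \<bullet> k \<le> a \<bullet> k + d} = cbox a (b - (1 - d) *\<^sub>R k)"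
  proof (rule set_eqI, rule iffI)
    fix x assume x: "x \<in> cbox a b \<inter> {x. x \<bullet> k \<le> a \<bullet> k + d}"
    then have xab: "x \<in> cbox a b" and xk: "x \<bullet> k \<le> a \<bullet> k + d" by auto
    show "x \<in> cbox a (b - (1 - d) *\<^sub>R k)"
      unfolding mem_box
    proof (intro ballI conjI)
      fix i :: 'a assume i: "i \<in> Basis"
      have xi: "a \<bullet> i \<le> x \<bullet> i" "x \<bullet> i \<le> b \<bullet> i" using xab i unfolding mem_box by blast+
      show "a \<bullet> i \<le> x \<bullet> i" by (rule xi(1))
      show "x \<bullet> i \<le> (b - (1 - d) *\<^sub>R k) \<bullet> i"
      proof (cases "i = k")
        case True then show ?thesis using xk unfolding m1 True kk bk by simp
      next
        case False then show ?thesis using xi(2) unfolding m1 i1[OF i False] by linarith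
      qed
    qed
  next
    fix x assume x: "x \<in> cbox a (b - (1 - d) *\<^sub>R k)"
    have xk0: "x \<bullet> k \<le> (b - (1 - d) *\<^sub>R k) \<bullet> k" using x k unfolding mem_box by blast
    have xk: "x \<bullet> k \<le> a \<bullet> k + d" using xk0 unfolding m1 kk bk by simp
    have "x \<in> cbox a b" unfolding mem_box
    proof (intro ballI conjI)
      fix i :: 'a assume i: "i \<in> Basis"
      have xi: "a \<bullet> i \<le> x \<bullet> i" "x \<bullet> i \<le> (b - (1 - d) *\<^sub>R k) \<bullet> i" using x i unfolding mem_box by blast+
      show "a \<bullet> i \<le> x \<bullet> i" by (rule xi(1))
      show "x \<bullet> i \<le> b \<bullet> i" using xi(2) p1[OF i] unfolding m1 by linarith
    qed
    then show "x \<in> cbox a b \<inter> {x. x \<bullet> k \<le> a \<bullet> k + d}" using xk by blast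
  qed
  show "cbox a b \<inter> {x. a \<bullet> k + d \<le> x \<bullet> k} = cbox (a + d *\<^sub>R k) b"
  proof (rule set_eqI, rule iffI)
    fix x assume x: "x \<in> cbox a b \<inter> {x. a \<bullet> k + d \<le> x \<bullet> k}"
    then have xab: "x \<in> cbox a b" and xk: "a \<bullet> k + d \<le> x \<bullet> k" by auto
    show "x \<in> cbox (a + d *\<^sub>R k) b"
      unfolding mem_box
    proof (intro ballI conjI)
      fix i :: 'a assume i: "i \<in> Basis"
      have xi: "a \<bullet> i \<le> x \<bullet> i" "x \<bullet> i \<le> b \<bullet> i" using xab i unfolding mem_box by blast+
      show "x \<bullet> i \<le> b \<bullet> i" by (rule xi(2))
      show "(a + d *\<^sub>R k) \<bullet> i \<le> x \<bullet> i"
      proof (cases "i = k")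
        case True then show ?thesis using xk unfolding m2 True kk by simp
      next
        case False then show ?thesis using xi(1) unfolding m2 i1[OF i False] by linarith
      qed
    qed
  next
    fix x assume x: "x \<in> cbox (a + d *\<^sub>R k) b"
    have xk0: "(a + d *\<^sub>R k) \<bullet> k \<le> x \<bullet> k" using x k unfolding mem_box by blast
    have xk: "a \<bullet> k + d \<le> x \<bullet> k" using xk0 unfolding m2 kk by simp
    have "x \<in> cbox a b" unfolding mem_box
    proof (intro ballI conjI)
      fix i :: 'a assume i: "i \<in> Basis"
      have xi: "(a + d *\<^sub>R k) \<bullet> i \<le> x \<bullet> i" "x \<bullet> i \<le> b \<bullet> i" using x i unfolding mem_box by blast+
      show "x \<bullet> i \<le> b \<bullet> i" by (rule xi(2))
      show "a \<bullet> i \<le> x \<bullet> i" using xi(1) p2[OF i] unfolding m2 by linarith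
    qed
    then show "x \<in> cbox a b \<inter> {x. a \<bullet> k + d \<le> x \<bullet> k}" using xk by blast
  qed
qed




lemma key_ineq:
  fixes X Dm :: "3 \<Rightarrow> 3 \<Rightarrow> real" and Bv q p :: real
  assumes Dsym: "\<And>i j. Dm i j = Dm j i"
    and Bge: "(\<Sum>i\<in>UNIV. \<Sum>j\<in>UNIV. (Dm i j)\<^sup>2) \<le> Bv" and Bpos: "0 < Bv"
    and q: "1 \<le> q" and p: "p = (q - 2) / 2"
  shows "0 \<le> (\<Sum>i\<in>UNIV. \<Sum>j\<in>UNIV. X i j *
     ((p * Bv powr (p - 1)) * ((\<Sum>k\<in>UNIV. \<Sum>l\<in>UNIV. 2 * Dm k l * ((X k l + X l k) / 2)) + 0) * Dm i j
       + Bv powr p * ((X i j + X j i) / 2)))"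
proof -
  define E where "E i j = (X i j + X j i) / 2" for i j
  define S where "S = (\<Sum>k\<in>UNIV. \<Sum>l\<in>UNIV. Dm k l * E k l)"
  define Y where "Y i j = (p * Bv powr (p - 1)) * (2 * S) * Dm i j + Bv powr p * E i j" for i j
  have S2: "(\<Sum>k\<in>UNIV. \<Sum>l\<in>UNIV. 2 * Dm k l * ((X k l + X l k) / 2)) + 0 = 2 * S"
    unfolding S_def E_def by (simp add: sum_distrib_left mult.assoc)
  have goal_eq: "(\<Sum>i\<in>UNIV. \<Sum>j\<in>UNIV. X i j *
     ((p * Bv powr (p - 1)) * ((\<Sum>k\<in>UNIV. \<Sum>l\<in>UNIV. 2 * Dm k l * ((X k l + X l k) / 2)) + 0) * Dm i j
       + Bv powr p * ((X i j + X j i) / 2))) = (\<Sum>i\<in>UNIV. \<Sum>j\<in>UNIV. X i j * Y i j)"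
    unfolding S2 Y_def E_def by simp
  have Ysym: "Y i j = Y j i" for i j unfolding Y_def E_def using Dsym by (simp add: add.commute)
  have sw: "(\<Sum>i\<in>UNIV. \<Sum>j\<in>UNIV. X i j * Y i j) = (\<Sum>i\<in>UNIV. \<Sum>j\<in>UNIV. X j i * Y i j)"
    using sum.swap[of "\<lambda>i j. X i j * Y i j" UNIV UNIV] Ysym by simp
  have XE: "(\<Sum>i\<in>UNIV. \<Sum>j\<in>UNIV. X i j * Y i j) = (\<Sum>i\<in>UNIV. \<Sum>j\<in>UNIV. E i j * Y i j)"
  proof -
    have "(\<Sum>i\<in>UNIV. \<Sum>j\<in>UNIV. E i j * Y i j) =
        ((\<Sum>i\<in>UNIV. \<Sum>j\<in>UNIV. X i j * Y i j) + (\<Sum>i\<in>UNIV. \<Sum>j\<in>UNIV. X j i * Y i j)) / 2"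
      unfolding E_def by (simp add: sum.distrib sum_divide_distrib[symmetric] algebra_simps)
    then show ?thesis using sw by simp
  qed
  define N where "N = (\<Sum>i\<in>UNIV. \<Sum>j\<in>UNIV. (E i j)\<^sup>2)"
  define M where "M = (\<Sum>i\<in>UNIV. \<Sum>j\<in>UNIV. (Dm i j)\<^sup>2)"
  have EY: "(\<Sum>i\<in>UNIV. \<Sum>j\<in>UNIV. E i j * Y i j) = (p * Bv powr (p - 1)) * (2 * S) * S + Bv powr p * N"
    unfolding Y_def S_def N_def
    by (simp add: algebra_simps sum.distrib sum_distrib_left power2_eq_square)
  have CS: "S\<^sup>2 \<le> M * N"
  proof -
    have "S = (\<Sum>x\<in>UNIV \<times> UNIV. Dm (fst x) (snd x) * E (fst x) (snd x))"
      unfolding S_def by (simp add: sum.cartesian_product case_prod_beta)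
    moreover have "M = (\<Sum>x\<in>UNIV \<times> UNIV. (Dm (fst x) (snd x))\<^sup>2)"
      unfolding M_def by (simp add: sum.cartesian_product case_prod_beta)
    moreover have "N = (\<Sum>x\<in>UNIV \<times> UNIV. (E (fst x) (snd x))\<^sup>2)"
      unfolding N_def by (simp add: sum.cartesian_product case_prod_beta)
    ultimately show ?thesis using Cauchy_Schwarz_ineq_sum by metis
  qed
  have N0: "0 \<le> N" unfolding N_def by (intro sum_nonneg) auto
  have MB: "M \<le> Bv" using Bge M_def by simp
  have MN: "M * N \<le> Bv * N" using MB N0 by (simp add: mult_right_mono)
  have Bp: "Bv powr p = Bv powr (p - 1) * Bv"
    using Bpos by (simp add: powr_diff)
  have P0: "0 < Bv powr (p - 1)" using Bpos by simp
  have inner: "0 \<le> (q - 2) * S\<^sup>2 + Bv * N"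
  proof (cases "q \<ge> 2")
    case True then show ?thesis using N0 Bpos by (simp add: add_nonneg_nonneg)
  next
    case False
    have h: "(-1) * S\<^sup>2 \<le> (q - 2) * S\<^sup>2" by (rule mult_right_mono) (use q in auto)
    then have "(q - 2) * S\<^sup>2 \<ge> - (S\<^sup>2)" by simp
    then show ?thesis using CS MN by linarith
  qed
  have "(p * Bv powr (p - 1)) * (2 * S) * S + Bv powr p * N = Bv powr (p - 1) * ((q - 2) * S\<^sup>2 + Bv * N)"
  proof -
    have qeq: "q = 2 * p + 2" using p by simp
    show ?thesis unfolding Bp qeq by (simp add: algebra_simps power2_eq_square)
  qed
  also have "\<dots> \<ge> 0" using P0 inner by simp
  finally show ?thesis using goal_eq XE EY by simp
qed




lemma periodic_shift_integral:
  fixes F :: "'a::euclidean_space \<Rightarrow> real"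
  assumes cont: "continuous_on UNIV F" and k: "k \<in> Basis" and per: "\<And>x. F (x + k) = F x"
    and bk: "b \<bullet> k = a \<bullet> k + 1" and c: "0 \<le> c" "c \<le> 1"
  shows "integral (cbox a b) (\<lambda>x. F (x + c *\<^sub>R k)) = integral (cbox a b) F"
proof -
  have int: "F integrable_on cbox p q" for p q
    by (rule integrable_continuous[OF continuous_on_subset[OF cont]]) auto
  define IL where "IL = integral (cbox a (b - (1 - c) *\<^sub>R k)) F"
  define IR where "IR = integral (cbox (a + c *\<^sub>R k) b) F"
  have hL: "(F has_integral IL) (cbox a (b - (1 - c) *\<^sub>R k))" unfolding IL_def using int by (rule integrable_integral)
  have hR: "(F has_integral IR) (cbox (a + c *\<^sub>R k) b)" unfolding IR_def using int by (rule integrable_integral)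
  have L1: "(F has_integral IL) (cbox a b \<inter> {x. x \<bullet> k \<le> a \<bullet> k + c})"
    unfolding box_split(1)[OF k bk c] by (rule hL)
  have R1: "(F has_integral IR) (cbox a b \<inter> {x. a \<bullet> k + c \<le> x \<bullet> k})"
    unfolding box_split(2)[OF k bk c] by (rule hR)
  have "(F has_integral (IL + IR)) (cbox a b)"
    by (rule has_integral_split[OF L1 R1 k])
  then have I: "integral (cbox a b) F = IL + IR" by (rule integral_unique)
  have e1: "a + c *\<^sub>R k - c *\<^sub>R k = a" by simp
  have s1: "((\<lambda>x. F (x + c *\<^sub>R k)) has_integral IR) (cbox a (b - c *\<^sub>R k))"
    using has_integral_shift[OF hR, of "c *\<^sub>R k"] unfolding e1 .
  have per': "F (x + c *\<^sub>R k) = F (x + (c - 1) *\<^sub>R k)" for x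
  proof -
    have e: "x + c *\<^sub>R k = (x + (c - 1) *\<^sub>R k) + k" by (simp add: algebra_simps)
    show ?thesis unfolding e by (rule per)
  qed
  have e2: "a - (c - 1) *\<^sub>R k = a + (1 - c) *\<^sub>R k" "b - (1 - c) *\<^sub>R k - (c - 1) *\<^sub>R k = b"
    by (simp_all add: algebra_simps)
  have s2: "((\<lambda>x. F (x + (c - 1) *\<^sub>R k)) has_integral IL) (cbox (a + (1 - c) *\<^sub>R k) b)"
    using has_integral_shift[OF hL, of "(c - 1) *\<^sub>R k"] unfolding e2 .
  have fe: "(\<lambda>x. F (x + c *\<^sub>R k)) = (\<lambda>x. F (x + (c - 1) *\<^sub>R k))"
    by (intro ext per')
  have s2': "((\<lambda>x. F (x + c *\<^sub>R k)) has_integral IL) (cbox (a + (1 - c) *\<^sub>R k) b)"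
    unfolding fe by (rule s2)
  have c': "0 \<le> 1 - c" "1 - c \<le> 1" using c by auto
  have e3: "b - (1 - (1 - c)) *\<^sub>R k = b - c *\<^sub>R k" by simp
  have L2: "((\<lambda>x. F (x + c *\<^sub>R k)) has_integral IR) (cbox a b \<inter> {x. x \<bullet> k \<le> a \<bullet> k + (1 - c)})"
    unfolding box_split(1)[OF k bk c'] e3 by (rule s1)
  have R2: "((\<lambda>x. F (x + c *\<^sub>R k)) has_integral IL) (cbox a b \<inter> {x. a \<bullet> k + (1 - c) \<le> x \<bullet> k})"
    unfolding box_split(2)[OF k bk c'] by (rule s2')
  have "((\<lambda>x. F (x + c *\<^sub>R k)) has_integral (IR + IL)) (cbox a b)"
    by (rule has_integral_split[OF L2 R2 k])
  then have "integral (cbox a b) (\<lambda>x. F (x + c *\<^sub>R k)) = IR + IL" by (rule integral_unique)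
  then show ?thesis using I by simp
qed

lemma integral_pd_zero:
  fixes G :: "'a::euclidean_space \<Rightarrow> real"
  assumes cG: "continuous_on UNIV G" and pG: "pd k G G'" and cG': "continuous_on UNIV G'"
    and k: "k \<in> Basis" and per: "\<And>z. G (z + k) = G z"
    and bk: "b \<bullet> k = a \<bullet> k + 1"
  shows "integral (cbox a b) G' = 0"
proof -
  define \<Phi> where "\<Phi> c = integral (cbox a b) (\<lambda>x. G (x + c *\<^sub>R k))" for c
  have cont2: "continuous_on UNIV (\<lambda>p::real\<times>'a. G' (snd p + fst p *\<^sub>R k))"
    by (intro continuous_on_compose2[OF cG'] continuous_intros) auto
  have "((\<lambda>c. integral (cbox a b) (\<lambda>x. G (x + c *\<^sub>R k))) has_field_derivative
       integral (cbox a b) (\<lambda>x. G' (x + 0 *\<^sub>R k))) (at 0 within UNIV)"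
  proof (rule leibniz_rule_field_derivative[where fx="\<lambda>c x. G' (x + c *\<^sub>R k)"])
    fix c :: real and x :: 'a
    show "((\<lambda>c. G (x + c *\<^sub>R k)) has_field_derivative G' (x + c *\<^sub>R k)) (at c within UNIV)"
      using pd_at[OF pG, of x c] by simp
  next
    fix c :: real
    show "(\<lambda>x. G (x + c *\<^sub>R k)) integrable_on cbox a b"
      by (intro integrable_continuous continuous_on_compose2[OF cG] continuous_intros) auto
  next
    show "continuous_on (UNIV \<times> cbox a b) (\<lambda>(c, x). G' (x + c *\<^sub>R k))"
      using continuous_on_subset[OF cont2] by (simp add: case_prod_beta)
  qed auto
  then have d1: "(\<Phi> has_vector_derivative integral (cbox a b) G') (at 0 within cbox 0 1)"
    unfolding \<Phi>_def
    by (auto simp: has_real_derivative_iff_has_vector_derivative intro: has_vector_derivative_at_within)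
  have "((\<lambda>c. \<Phi> 0) has_vector_derivative 0) (at 0 within cbox 0 1)"
    by (rule has_vector_derivative_const)
  then have d2: "(\<Phi> has_vector_derivative 0) (at 0 within cbox 0 1)"
  proof (rule has_vector_derivative_transform_within[where d=1])
    fix c :: real assume "c \<in> cbox 0 1"
    then have "0 \<le> c" "c \<le> 1" by auto
    then show "\<Phi> 0 = \<Phi> c"
      unfolding \<Phi>_def using periodic_shift_integral[OF cG k per bk, of c] by simp
  qed auto
  show ?thesis
    using vector_derivative_unique_within_closed_interval[of 0 1 0, OF _ _ d1 d2] by auto
qed




lemma pd_divc: "pd v f f' \<Longrightarrow> pd v (\<lambda>z. f z / c) (\<lambda>z. f' z / c)"
  unfolding pd_def by (auto intro: DERIV_cdivide)

lemma pd_pow2: "pd v f f' \<Longrightarrow> pd v (\<lambda>z. (f z)\<^sup>2) (\<lambda>z. 2 * f z * f' z)"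
  unfolding pd_def by (auto intro!: derivative_eq_intros)

lemma sm_divc: "sm f \<Longrightarrow> sm (\<lambda>z. f z / c)"
proof -
  assume "sm f"
  then have "sm (\<lambda>z. f z * (1 / c))" using sm_mult sm_const by blast
  then show ?thesis by simp
qed

lemma sm_pow2: "sm f \<Longrightarrow> sm (\<lambda>z. (f z)\<^sup>2)"
proof -
  assume "sm f"
  then have "sm (\<lambda>z. f z * f z)" using sm_mult by blast
  then show ?thesis by (simp add: power2_eq_square)
qed

lemma per_add: "per k f \<Longrightarrow> per k g \<Longrightarrow> per k (\<lambda>z. f z + g z)" unfolding per_def by simp
lemma per_mult: "per k f \<Longrightarrow> per k g \<Longrightarrow> per k (\<lambda>z. f z * g z)" unfolding per_def by simp
lemma per_divc: "per k f \<Longrightarrow> per k (\<lambda>z. f z / c)" unfolding per_def by simp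
lemma per_pow2: "per k f \<Longrightarrow> per k (\<lambda>z. (f z)\<^sup>2)" unfolding per_def by simp
lemma per_powr: "per k f \<Longrightarrow> per k (\<lambda>z. f z powr r)" unfolding per_def by simp
lemma per_const: "per k (\<lambda>z. c)" unfolding per_def by simp
lemma per_sum: "(\<And>i. i \<in> S \<Longrightarrow> per k (f i)) \<Longrightarrow> per k (\<lambda>z. \<Sum>i\<in>S. f i z)"
  unfolding per_def by simp

type_synonym st = "real \<times> (real^3)"

lemma et_Basis: "((1::real), (0::real^3)) \<in> (Basis :: st set)"
  by (simp add: Basis_prod_def)

lemma ej_Basis: "((0::real), axis j (1::real)) \<in> (Basis :: st set)"
  by (simp add: Basis_prod_def)


theorem lemma4p1:
  fixes u :: "real \<Rightarrow> real^3 \<Rightarrow> real^3" and \<delta> q t :: real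
  assumes "\<delta> > 0" and "q \<ge> 1" and "t > 0"
    and "\<And>i. smooth_fun (comp u i)"
    and "\<And>s x k. u s (x + axis k 1) = u s x"
  shows "JJ \<delta> q t u \<ge> 0"
proof -
  note dpos = assms(1) and q1 = assms(2) and smu = assms(4) and peru = assms(5)
  define p where "p = (q - 2) / 2"
  define et :: st where "et = (1, 0)"
  define ej :: "3 \<Rightarrow> st" where "ej j = (0, axis j 1)" for j
  define c where "c i = comp u i" for i
  define D where "D i j = symgrad u i j" for i j
  define B where "B = Bfun \<delta> u"
  define W where "W i j = (\<lambda>y. B y powr p * D i j y)" for i j
  define box :: "st set" where "box = cbox (0, 0) (t, \<chi> i. 1)"
  have etB: "et \<in> Basis" unfolding et_def by (rule et_Basis)
  have ejB: "ej j \<in> Basis" for j unfolding ej_def by (rule ej_Basis)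
  have dt_eq: "dt = dirD et" unfolding et_def by (intro ext) (simp add: dt_def)
  have dx_eq: "dx j = dirD (ej j)" for j unfolding ej_def by (intro ext) (simp add: dx_def)
  have D_eq: "D i j = (\<lambda>z. (dirD (ej j) (c i) z + dirD (ej i) (c j) z) / 2)" for i j
    unfolding D_def c_def by (intro ext) (simp add: symgrad_def dx_eq)
  have B_eq: "B = (\<lambda>z. (\<Sum>i\<in>UNIV. \<Sum>j\<in>UNIV. (D i j z)\<^sup>2) + \<delta>\<^sup>2)"
    unfolding B_def D_def by (intro ext) (simp add: Bfun_def)
  have div_eq: "divflux \<delta> q u i = (\<lambda>z. \<Sum>j\<in>UNIV. dirD (ej j) (W i j) z)" for i
    unfolding W_def B_def D_def p_def by (intro ext) (simp add: divflux_def dx_eq)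
  have sc: "sm (c i)" for i unfolding c_def by (rule smooth_fun_sm[OF smu])
  have sD: "sm (D i j)" for i j
    unfolding D_eq by (intro sm_divc sm_add sm_dirD sc ejB)
  have sB: "sm B" unfolding B_eq
    by (intro sm_add sm_sum sm_pow2 sD sm_const) auto
  have Bpos: "B z > 0" for z
  proof -
    have "0 \<le> (\<Sum>i\<in>UNIV. \<Sum>j\<in>UNIV. (D i j z)\<^sup>2)" by (intro sum_nonneg) auto
    moreover have "0 < \<delta>\<^sup>2" using dpos by simp
    moreover have "B z = (\<Sum>i\<in>UNIV. \<Sum>j\<in>UNIV. (D i j z)\<^sup>2) + \<delta>\<^sup>2" unfolding B_eq by simp
    ultimately show ?thesis by linarith
  qed
  have sW: "sm (W i j)" for i j unfolding W_def
    by (intro sm_mult sm_powr sB sD Bpos)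
  have pc: "per (ej k) (c i)" for k i
    unfolding per_def c_def comp_def ej_def by (simp add: peru)
  have pD: "per (ej k) (D i j)" for k i j
    unfolding D_eq by (intro per_divc per_add per_dirD pc)
  have pB: "per (ej k) B" for k unfolding B_eq
    by (intro per_add per_sum per_pow2 pD per_const)
  have pW: "per (ej k) (W i j)" for k i j unfolding W_def
    by (intro per_mult per_powr pB pD)
  define A where "A i = dirD et (c i)" for i
  define V where "V i j = dirD et (W i j)" for i j
  define X where "X i j = dirD et (dirD (ej j) (c i))" for i j
  have sA: "sm (A i)" for i unfolding A_def by (intro sm_dirD sc etB)
  have sV: "sm (V i j)" for i j unfolding V_def by (intro sm_dirD sW etB)
  have sX: "sm (X i j)" for i j unfolding X_def by (intro sm_dirD sc etB ejB)
  have pA: "per (ej k) (A i)" for k i unfolding A_def by (intro per_dirD pc)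
  have pV: "per (ej k) (V i j)" for k i j unfolding V_def by (intro per_dirD pW)
  have cont: "sm f \<Longrightarrow> f integrable_on box" for f :: "st \<Rightarrow> real"
    unfolding box_def by (rule integrable_continuous[OF continuous_on_subset[OF sm_cont]]) auto
  have stepA: "dt (divflux \<delta> q u i) z = (\<Sum>j\<in>UNIV. dirD (ej j) (V i j) z)" for i z
  proof -
    have "pd et (\<lambda>z. \<Sum>j\<in>UNIV. dirD (ej j) (W i j) z) (\<lambda>z. \<Sum>j\<in>UNIV. dirD et (dirD (ej j) (W i j)) z)"
      by (intro pd_sum sm_pd sm_dirD sW ejB etB) auto
    then have "dt (divflux \<delta> q u i) = (\<lambda>z. \<Sum>j\<in>UNIV. dirD et (dirD (ej j) (W i j)) z)"
      unfolding dt_eq div_eq by (rule pd_dirD)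
    then show ?thesis unfolding V_def using schwarz[OF sW ejB etB] by simp
  qed
  have JJ1: "JJ \<delta> q t u = - integral box (\<lambda>z. \<Sum>i\<in>UNIV. \<Sum>j\<in>UNIV. A i z * dirD (ej j) (V i j) z)"
    unfolding JJ_def box_def stepA
    by (simp add: A_def dt_eq c_def sum_distrib_left)
  have bk: "(t, \<chi> i. (1::real)) \<bullet> ej j = (0::real, 0::real^3) \<bullet> ej j + 1" for j
    unfolding ej_def by (simp add: inner_axis)
  have ibp: "integral box (\<lambda>z. A i z * dirD (ej j) (V i j) z) = - integral box (\<lambda>z. X i j z * V i j z)" for i j
  proof -
    have pG: "pd (ej j) (\<lambda>z. A i z * V i j z)
       (\<lambda>z. dirD (ej j) (A i) z * V i j z + A i z * dirD (ej j) (V i j) z)"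
      by (intro pd_mult sm_pd sA sV ejB)
    have sG': "sm (\<lambda>z. dirD (ej j) (A i) z * V i j z + A i z * dirD (ej j) (V i j) z)"
      by (intro sm_add sm_mult sm_dirD sA sV ejB)
    have "integral box (\<lambda>z. dirD (ej j) (A i) z * V i j z + A i z * dirD (ej j) (V i j) z) = 0"
      unfolding box_def
    proof (rule integral_pd_zero[OF _ pG _ ejB])
      show "continuous_on UNIV (\<lambda>z. A i z * V i j z)" by (intro sm_cont sm_mult sA sV)
      show "continuous_on UNIV (\<lambda>z. dirD (ej j) (A i) z * V i j z + A i z * dirD (ej j) (V i j) z)"
        by (rule sm_cont[OF sG'])
      show "A i (z + ej j) * V i j (z + ej j) = A i z * V i j z" for z
      proof -
        have h1: "A i (z + ej j) = A i z" using pA[of j i] unfolding per_def by blast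
        have h2: "V i j (z + ej j) = V i j z" using pV[of j i j] unfolding per_def by blast
        show ?thesis by (simp only: h1 h2)
      qed
      show "(t, \<chi> i. (1::real)) \<bullet> ej j = (0::real, 0::real^3) \<bullet> ej j + 1" by (rule bk)
    qed
    moreover have "integral box (\<lambda>z. dirD (ej j) (A i) z * V i j z + A i z * dirD (ej j) (V i j) z)
       = integral box (\<lambda>z. dirD (ej j) (A i) z * V i j z) + integral box (\<lambda>z. A i z * dirD (ej j) (V i j) z)"
      by (intro integral_add cont sm_mult sm_dirD sA sV ejB)
    moreover have "dirD (ej j) (A i) z = X i j z" for z
      unfolding A_def X_def using schwarz[OF sc etB ejB] by simp
    ultimately show ?thesis by simp
  qed
  have JJ2: "JJ \<delta> q t u = integral box (\<lambda>z. \<Sum>i\<in>UNIV. \<Sum>j\<in>UNIV. X i j z * V i j z)"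
  proof -
    have "integral box (\<lambda>z. \<Sum>i\<in>UNIV. \<Sum>j\<in>UNIV. A i z * dirD (ej j) (V i j) z)
        = (\<Sum>i\<in>UNIV. \<Sum>j\<in>UNIV. integral box (\<lambda>z. A i z * dirD (ej j) (V i j) z))"
      by (subst integral_sum, simp, intro cont sm_sum sm_mult sA sm_dirD sV ejB, simp)
         (subst integral_sum, auto intro!: cont sm_mult sA sm_dirD sV ejB)
    moreover have "integral box (\<lambda>z. \<Sum>i\<in>UNIV. \<Sum>j\<in>UNIV. X i j z * V i j z)
        = (\<Sum>i\<in>UNIV. \<Sum>j\<in>UNIV. integral box (\<lambda>z. X i j z * V i j z))"
      by (subst integral_sum, simp, intro cont sm_sum sm_mult sX sV, simp)
         (subst integral_sum, auto intro!: cont sm_mult sX sV)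
    ultimately show ?thesis using JJ1 ibp by (simp add: sum_negf)
  qed
  define E where "E i j = (\<lambda>z. (X i j z + X j i z) / 2)" for i j
  have pDt: "pd et (D i j) (E i j)" for i j
    unfolding D_eq E_def X_def
    by (intro pd_divc pd_add sm_pd sm_dirD sc ejB etB)
  define B' where "B' = (\<lambda>z. (\<Sum>i\<in>UNIV. \<Sum>j\<in>UNIV. 2 * D i j z * E i j z) + 0)"
  have pBt: "pd et B B'" unfolding B_eq B'_def
    by (intro pd_add pd_sum pd_pow2 pDt pd_const) auto
  have V_eq: "V i j z = (p * B z powr (p - 1)) * B' z * D i j z + B z powr p * E i j z" for i j z
  proof -
    have "pd et (W i j) (\<lambda>z. (p * B z powr (p - 1)) * B' z * D i j z + B z powr p * E i j z)"
      unfolding W_def by (intro pd_mult pd_powr pBt pDt Bpos)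
    then show ?thesis unfolding V_def by (simp add: pd_dirD)
  qed
  have Dsym: "D i j z = D j i z" for i j z unfolding D_eq by simp
  have pw: "0 \<le> (\<Sum>i\<in>UNIV. \<Sum>j\<in>UNIV. X i j z * V i j z)" for z
  proof -
    have Bge: "(\<Sum>i\<in>UNIV. \<Sum>j\<in>UNIV. (D i j z)\<^sup>2) \<le> B z" unfolding B_eq by simp
    show ?thesis
      unfolding V_eq B'_def E_def
      using key_ineq[of "\<lambda>i j. D i j z" "B z" q p "\<lambda>i j. X i j z", OF _ Bge Bpos q1 p_def] Dsym
      by (simp add: mult.assoc)
  qed
  show ?thesis unfolding JJ2
    by (rule integral_nonneg[OF cont pw]) (auto intro!: sm_sum sm_mult sX sV)
qed


end
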